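(* In the setting of the context, assume in addition that there is $\mathcal{R}>0$ with $\nabla m(x)=0$ whenever $\|x\|\ge\mathcal{R}$. Then with $M=\frac34$ and $R=8L\mathcal{R}$, for all $x,y\in\mathbb{H}$ with $\|x-y\|_\alpha\ge R$, $$\mathbf{1}_{x^l\ne y^l}\Big\langle\frac{x^l-y^l}{\|x^l-y^l\|},b(x)-b(y)\Big\rangle+\mathbf{1}_{x^h\ne y^h}\,\alpha\Big\langle\frac{x^h-y^h}{\|x^h-y^h\|},b(x)-b(y)\Big\rangle\le M\|x-y\|_\alpha .$$
   Context: Let $(\mathbb{H},\langle\cdot,\cdot\rangle,\|\cdot\|)$ be a separable real Hilbert space and $\mathcal{G}$ a trace-class, symmetric, positive definite operator on $\mathbb{H}$. Let $(e_k)_{k\ge1}$ be an orthonormal basis with $\mathcal{G}e_k=\lambda_ke_k$, where $\lambda_k>0$, $\lambda_k\downarrow0$, $\lambda_1=1$, $\sum_k\lambda_k<\infty$. Let $U(x)=\frac a2\|x\|^2+m(x)$ with $a\ge0$, where $m:\mathbb{H}\to\mathbb{R}$ is bounded from below and Fréchet differentiable with $\|\nabla m(x)-\nabla m(y)\|\le L\|x-y\|$ for all $x,y$, for some $L\ge1$. Set $b(x)=-\mathcal{G}\nabla U(x)$. Let $n=\min\{k\in\mathbb{N}_+:\lambda_{k+1}<\frac{1}{2L}\}$, $\mathbb{H}^l=\mathrm{span}\{e_1,\dots,e_n\}$, $\mathbb{H}^h$ its orthogonal complement, $x^l,x^h$ the orthogonal projections, $\alpha=2(1+L)$ and $\|x\|_\alpha=\|x^l\|+\alpha\|x^h\|$.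 *)

theory Defs
  imports "HOL-Analysis.Analysis"
begin

text \<open>Eigenvalues are indexed from 0: lam k stands for the paper's lambda_(k+1),
  and e k for the paper's e_(k+1).\<close>

text \<open>n = min{k >= 1 : lambda_(k+1) < 1/(2L)}; with 0-based indexing lambda_(k+1) = lam k.\<close>
definition low_dim :: "(nat \<Rightarrow> real) \<Rightarrow> real \<Rightarrow> nat" where
  "low_dim lam L = (LEAST k. 1 \<le> k \<and> lam k < 1 / (2 * L))"

definition proj_low :: "(nat \<Rightarrow> 'a::real_inner) \<Rightarrow> nat \<Rightarrow> 'a \<Rightarrow> 'a" where
  "proj_low e n x = (\<Sum>i<n. (x \<bullet> e i) *\<^sub>R e i)"

definition proj_high :: "(nat \<Rightarrow> 'a::real_inner) \<Rightarrow> nat \<Rightarrow> 'a \<Rightarrow> 'a" where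
  "proj_high e n x = x - proj_low e n x"

definition alpha_norm :: "real \<Rightarrow> (nat \<Rightarrow> 'a::real_inner) \<Rightarrow> nat \<Rightarrow> 'a \<Rightarrow> real" where
  "alpha_norm \<alpha> e n x = norm (proj_low e n x) + \<alpha> * norm (proj_high e n x)"

end

theory Submission
  imports Defs
begin


lemma E_inner_e:
  fixes e :: "nat \<Rightarrow> 'a::real_inner"
  assumes orth: "\<And>i j. e i \<bullet> e j = (if i = j then 1 else 0)" and fin: "finite A"
  shows "(\<Sum>i\<in>A. c i *\<^sub>R e i) \<bullet> e j = (if j \<in> A then c j else 0)"
proof -
  have "(\<Sum>i\<in>A. c i *\<^sub>R e i) \<bullet> e j = (\<Sum>i\<in>A. c i * (if i = j then 1 else 0))"
    by (simp add: inner_sum_left orth)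
  also have "\<dots> = (if j \<in> A then c j else 0)"
    using fin by (simp add: if_distrib sum.delta' cong: if_cong)
  finally show ?thesis .
qed

lemma E_inner_E:
  fixes e :: "nat \<Rightarrow> 'a::real_inner"
  assumes orth: "\<And>i j. e i \<bullet> e j = (if i = j then 1 else 0)" and fin: "finite A" "finite B"
  shows "(\<Sum>i\<in>A. c i *\<^sub>R e i) \<bullet> (\<Sum>j\<in>B. d j *\<^sub>R e j) = (\<Sum>i\<in>A\<inter>B. c i * d i)"
proof -
  have "(\<Sum>i\<in>A. c i *\<^sub>R e i) \<bullet> (\<Sum>j\<in>B. d j *\<^sub>R e j)
      = (\<Sum>j\<in>B. d j * (if j \<in> A then c j else 0))"
    by (simp add: inner_sum_right E_inner_e[OF orth fin(1)])
  also have "\<dots> = (\<Sum>j\<in>B. if j \<in> A then c j * d j else 0)"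
    by (rule sum.cong) auto
  also have "\<dots> = (\<Sum>j\<in>B\<inter>A. c j * d j)"
    using fin by (simp add: sum.inter_restrict)
  finally show ?thesis by (simp add: Int_commute)
qed

lemma norm_E:
  fixes e :: "nat \<Rightarrow> 'a::real_inner"
  assumes orth: "\<And>i j. e i \<bullet> e j = (if i = j then 1 else 0)" and fin: "finite A"
  shows "(norm (\<Sum>i\<in>A. c i *\<^sub>R e i))^2 = (\<Sum>i\<in>A. (c i)^2)"
proof -
  have "(norm (\<Sum>i\<in>A. c i *\<^sub>R e i))^2 = (\<Sum>i\<in>A. c i *\<^sub>R e i) \<bullet> (\<Sum>i\<in>A. c i *\<^sub>R e i)"
    by (simp only: power2_norm_eq_inner)
  also have "\<dots> = (\<Sum>i\<in>A. (c i)^2)" by (simp add: E_inner_E[OF orth fin fin] power2_eq_square)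
  finally show ?thesis .
qed

lemma G_E:
  assumes "bounded_linear G" "\<And>k. G (e k) = lam k *\<^sub>R e k"
  shows "G (\<Sum>i\<in>A. c i *\<^sub>R e i) = (\<Sum>i\<in>A. (lam i * c i) *\<^sub>R e i)"
proof -
  have l: "linear G" using assms(1) bounded_linear.linear by blast
  show ?thesis by (simp add: real_vector.linear_sum[OF l] linear_cmul[OF l] assms(2) mult.commute)
qed

lemma span_rep:
  fixes e :: "nat \<Rightarrow> 'a::real_inner"
  assumes orth: "\<And>i j. e i \<bullet> e j = (if i = j then 1 else 0)"
    and v: "v \<in> span (range e)"
  shows "\<exists>N. \<forall>M\<ge>N. v = (\<Sum>i<M. (v \<bullet> e i) *\<^sub>R e i)"
proof (rule span_induct[OF v])
  show "subspace (Collect (\<lambda>v. \<exists>N. \<forall>M\<ge>N. v = (\<Sum>i<M. (v \<bullet> e i) *\<^sub>R e i)))" unfolding subspace_def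
  proof (intro conjI ballI allI)
    show "0 \<in> Collect (\<lambda>v. \<exists>N. \<forall>M\<ge>N. v = (\<Sum>i<M. (v \<bullet> e i) *\<^sub>R e i))" by simp
  next
    fix x y assume x: "x \<in> Collect (\<lambda>v. \<exists>N. \<forall>M\<ge>N. v = (\<Sum>i<M. (v \<bullet> e i) *\<^sub>R e i))"
      and y: "y \<in> Collect (\<lambda>v. \<exists>N. \<forall>M\<ge>N. v = (\<Sum>i<M. (v \<bullet> e i) *\<^sub>R e i))"
    then obtain N1 N2 where n1: "\<forall>M\<ge>N1. x = (\<Sum>i<M. (x \<bullet> e i) *\<^sub>R e i)"
      and n2: "\<forall>M\<ge>N2. y = (\<Sum>i<M. (y \<bullet> e i) *\<^sub>R e i)" by auto
    have "\<forall>M\<ge>max N1 N2. x + y = (\<Sum>i<M. ((x+y) \<bullet> e i) *\<^sub>R e i)"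
    proof (intro allI impI)
      fix M assume "max N1 N2 \<le> M"
      then have M1: "N1 \<le> M" "N2 \<le> M" by simp_all
      have "x = (\<Sum>i<M. (x \<bullet> e i) *\<^sub>R e i)" by (rule n1[rule_format, OF M1(1)])
      moreover have "y = (\<Sum>i<M. (y \<bullet> e i) *\<^sub>R e i)" by (rule n2[rule_format, OF M1(2)])
      ultimately show "x + y = (\<Sum>i<M. ((x+y) \<bullet> e i) *\<^sub>R e i)"
        by (simp add: inner_add_left scaleR_add_left sum.distrib)
    qed
    then show "x + y \<in> Collect (\<lambda>v. \<exists>N. \<forall>M\<ge>N. v = (\<Sum>i<M. (v \<bullet> e i) *\<^sub>R e i))" by blast
  next
    fix c x assume x: "x \<in> Collect (\<lambda>v. \<exists>N. \<forall>M\<ge>N. v = (\<Sum>i<M. (v \<bullet> e i) *\<^sub>R e i))"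
    then obtain N1 where n1: "\<forall>M\<ge>N1. x = (\<Sum>i<M. (x \<bullet> e i) *\<^sub>R e i)" by auto
    have "\<forall>M\<ge>N1. c *\<^sub>R x = (\<Sum>i<M. ((c *\<^sub>R x) \<bullet> e i) *\<^sub>R e i)"
    proof (intro allI impI)
      fix M assume "N1 \<le> M"
      then have "x = (\<Sum>i<M. (x \<bullet> e i) *\<^sub>R e i)" by (rule n1[rule_format])
      then have "c *\<^sub>R x = c *\<^sub>R (\<Sum>i<M. (x \<bullet> e i) *\<^sub>R e i)" by (rule arg_cong)
      also have "\<dots> = (\<Sum>i<M. ((c *\<^sub>R x) \<bullet> e i) *\<^sub>R e i)"
        by (simp add: scaleR_sum_right)
      finally show "c *\<^sub>R x = (\<Sum>i<M. ((c *\<^sub>R x) \<bullet> e i) *\<^sub>R e i)" .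
    qed
    then show "c *\<^sub>R x \<in> Collect (\<lambda>v. \<exists>N. \<forall>M\<ge>N. v = (\<Sum>i<M. (v \<bullet> e i) *\<^sub>R e i))" by blast
  qed
next
  fix x assume "x \<in> range e"
  then obtain j where x: "x = e j" by auto
  have "\<forall>M\<ge>Suc j. x = (\<Sum>i<M. (x \<bullet> e i) *\<^sub>R e i)"
  proof (intro allI impI)
    fix M assume "Suc j \<le> M"
    have "(\<Sum>i<M. (x \<bullet> e i) *\<^sub>R e i) = (\<Sum>i<M. (if i = j then e j else 0))"
      by (rule sum.cong) (auto simp: x orth)
    also have "\<dots> = e j" using \<open>Suc j \<le> M\<close> by (simp add: sum.delta')
    finally show "x = (\<Sum>i<M. (x \<bullet> e i) *\<^sub>R e i)" by (simp add: x)
  qed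
  then show "\<exists>N. \<forall>M\<ge>N. x = (\<Sum>i<M. (x \<bullet> e i) *\<^sub>R e i)" by blast
qed

lemma dense_ge:
  assumes "closure (span (range e)) = UNIV" "continuous_on UNIV h"
    "\<And>v. v \<in> span (range e) \<Longrightarrow> 0 \<le> (h v :: real)"
  shows "0 \<le> h x"
proof -
  have "closed {v. (\<lambda>_. 0) v \<le> h v}" by (rule closed_Collect_le) (auto intro: assms(2) continuous_intros)
  then have "closure (span (range e)) \<subseteq> {v. 0 \<le> h v}"
    using assms(3) by (intro closure_minimal) auto
  then show ?thesis using assms(1) by auto
qed

lemma fin_pos:
  fixes e :: "nat \<Rightarrow> 'a::real_inner"
  assumes orth: "\<And>i j. e i \<bullet> e j = (if i = j then 1 else 0)" and fin: "finite B"
    and AB: "A \<subseteq> B" and lp: "\<And>i. lam i \<ge> 0"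
  shows "0 \<le> (\<Sum>i\<in>A. c i *\<^sub>R e i) \<bullet> (\<Sum>i\<in>B. (lam i * c i) *\<^sub>R e i)"
proof -
  have finA: "finite A" using fin AB finite_subset by blast
  have "(\<Sum>i\<in>A. c i *\<^sub>R e i) \<bullet> (\<Sum>i\<in>B. (lam i * c i) *\<^sub>R e i) = (\<Sum>i\<in>A\<inter>B. c i * (lam i * c i))"
    by (rule E_inner_E[OF orth finA fin])
  also have "\<dots> \<ge> 0"
    by (rule sum_nonneg) (metis lp mult.left_commute mult_nonneg_nonneg zero_le_square)
  finally show ?thesis .
qed

lemma fin_CS:
  fixes e :: "nat \<Rightarrow> 'a::real_inner"
  assumes orth: "\<And>i j. e i \<bullet> e j = (if i = j then 1 else 0)" and fin: "finite B"
    and AB: "A \<subseteq> B" and lp: "\<And>i. i \<in> A \<Longrightarrow> 0 \<le> lam i \<and> lam i \<le> k"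
  shows "0 \<le> k * norm (\<Sum>i\<in>A. c i *\<^sub>R e i) * norm (\<Sum>i\<in>B. w i *\<^sub>R e i)
           + (\<Sum>i\<in>A. c i *\<^sub>R e i) \<bullet> (\<Sum>i\<in>B. (lam i * w i) *\<^sub>R e i)"
proof (cases "A = {}")
  case True then show ?thesis by simp
next
  case False
  then obtain i0 where "i0 \<in> A" by blast
  then have k0: "0 \<le> k" using lp by force
  have finA: "finite A" using fin AB finite_subset by blast
  have AB': "A \<inter> B = A" "A \<inter> A = A" using AB by auto
  define V where "V = (\<Sum>i\<in>A. (lam i * w i) *\<^sub>R e i)"
  have eq: "(\<Sum>i\<in>A. c i *\<^sub>R e i) \<bullet> (\<Sum>i\<in>B. (lam i * w i) *\<^sub>R e i) = (\<Sum>i\<in>A. c i *\<^sub>R e i) \<bullet> V"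
    unfolding V_def by (simp add: E_inner_E[OF orth finA fin] E_inner_E[OF orth finA finA] AB')
  have "(norm V)^2 = (\<Sum>i\<in>A. (lam i * w i)^2)" unfolding V_def by (rule norm_E[OF orth finA])
  also have "\<dots> \<le> (\<Sum>i\<in>A. k^2 * (w i)^2)"
  proof (rule sum_mono)
    fix i assume "i \<in> A"
    then have "0 \<le> lam i" "lam i \<le> k" using lp by auto
    then have "(lam i)^2 \<le> k^2" by (simp add: power_mono)
    then show "(lam i * w i)^2 \<le> k^2 * (w i)^2"
      by (simp add: power_mult_distrib mult_right_mono)
  qed
  also have "\<dots> = k^2 * (\<Sum>i\<in>A. (w i)^2)" by (simp add: sum_distrib_left)
  also have "\<dots> \<le> k^2 * (\<Sum>i\<in>B. (w i)^2)"
    by (intro mult_left_mono sum_mono2 fin AB) auto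
  also have "\<dots> = (k * norm (\<Sum>i\<in>B. w i *\<^sub>R e i))^2"
    by (simp add: power_mult_distrib norm_E[OF orth fin])
  finally have "norm V \<le> k * norm (\<Sum>i\<in>B. w i *\<^sub>R e i)"
    by (rule power2_le_imp_le) (simp add: k0)
  moreover have "- ((\<Sum>i\<in>A. c i *\<^sub>R e i) \<bullet> V) \<le> norm (\<Sum>i\<in>A. c i *\<^sub>R e i) * norm V"
    by (metis Cauchy_Schwarz_ineq2 abs_le_D2)
  ultimately have "- ((\<Sum>i\<in>A. c i *\<^sub>R e i) \<bullet> V) \<le> norm (\<Sum>i\<in>A. c i *\<^sub>R e i) * (k * norm (\<Sum>i\<in>B. w i *\<^sub>R e i))"
    by (meson mult_left_mono norm_ge_zero order_trans)
  then show ?thesis unfolding eq by (simp add: algebra_simps)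
qed


theorem mainTheorem12:
  fixes e :: "nat \<Rightarrow> 'a::{real_inner, complete_space}"
    and lam :: "nat \<Rightarrow> real"
    and G :: "'a \<Rightarrow> 'a"
    and m :: "'a \<Rightarrow> real"
    and gm :: "'a \<Rightarrow> 'a"
    and a L R0 :: real
  assumes orthonormal: "\<And>i j. e i \<bullet> e j = (if i = j then 1 else 0)"
    and complete_basis: "closure (span (range e)) = UNIV"
    and G_bounded_linear: "bounded_linear G"
    and G_eigen: "\<And>k. G (e k) = lam k *\<^sub>R e k"
    and lam_pos: "\<And>k. lam k > 0"
    and lam_decr: "decseq lam"
    and lam_lim: "lam \<longlonglongrightarrow> 0"
    and lam_first: "lam 0 = 1"
    and lam_summable: "summable lam"
    and a_nonneg: "a \<ge> 0"
    and m_bdd_below: "bdd_below (range m)"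
    and m_grad: "\<And>x. (m has_derivative (\<lambda>h. gm x \<bullet> h)) (at x)"
    and gm_lipschitz: "\<And>x y. norm (gm x - gm y) \<le> L * norm (x - y)"
    and L_ge: "L \<ge> 1"
    and R0_pos: "R0 > 0"
    and gm_vanish: "\<And>x. norm x \<ge> R0 \<Longrightarrow> gm x = 0"
  shows "let n = low_dim lam L;
             \<alpha> = 2 * (1 + L);
             b = (\<lambda>x. - G (a *\<^sub>R x + gm x));
             xl = proj_low e n; xh = proj_high e n
         in \<forall>x y. alpha_norm \<alpha> e n (x - y) \<ge> 8 * L * R0 \<longrightarrow>
              (if xl x \<noteq> xl y
                 then ((1 / norm (xl x - xl y)) *\<^sub>R (xl x - xl y)) \<bullet> (b x - b y) else 0)
            + (if xh x \<noteq> xh y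
                 then \<alpha> * (((1 / norm (xh x - xh y)) *\<^sub>R (xh x - xh y)) \<bullet> (b x - b y)) else 0)
            \<le> 3 / 4 * alpha_norm \<alpha> e n (x - y)"
  
proof -
  have l: "linear G" using G_bounded_linear bounded_linear.linear by blast
  have G_cont: "continuous_on UNIV G" using G_bounded_linear linear_continuous_on by blast
  define n where "n = low_dim lam L"
  have ex: "\<exists>k. 1 \<le> k \<and> lam k < 1 / (2 * L)"
  proof -
    have "0 < 1 / (2 * L)" using L_ge by simp
    then have "eventually (\<lambda>k. lam k < 1 / (2 * L)) sequentially"
      using order_tendstoD(2)[OF lam_lim] by blast
    then obtain N where "\<And>k. k \<ge> N \<Longrightarrow> lam k < 1 / (2 * L)"
      unfolding eventually_sequentially by blast
    then show ?thesis by (intro exI[of _ "max N 1"]) auto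
  qed
  have lamn: "lam n < 1 / (2 * L)"
    unfolding n_def low_dim_def using LeastI_ex[OF ex] by blast
  have lam_le1: "\<And>i. lam i \<le> 1" using lam_decr lam_first by (metis decseqD le0)
  have lam_len: "\<And>i. n \<le> i \<Longrightarrow> lam i \<le> lam n" using lam_decr by (metis decseqD)
  have lam_nn: "\<And>i. 0 \<le> lam i" using lam_pos less_imp_le by blast
  have orth': "\<And>i j. e i \<bullet> e j = (if i = j then 1 else 0)" by (rule orthonormal)
  have rep2: "\<exists>M\<ge>n. u = (\<Sum>i<M. (u \<bullet> e i) *\<^sub>R e i) \<and> w = (\<Sum>i<M. (w \<bullet> e i) *\<^sub>R e i)"
    if uw: "u \<in> span (range e)" "w \<in> span (range e)" for u w
  proof -
    obtain N1 where n1: "\<forall>M\<ge>N1. u = (\<Sum>i<M. (u \<bullet> e i) *\<^sub>R e i)"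
      using span_rep[OF orth' uw(1)] by blast
    obtain N2 where n2: "\<forall>M\<ge>N2. w = (\<Sum>i<M. (w \<bullet> e i) *\<^sub>R e i)"
      using span_rep[OF orth' uw(2)] by blast
    let ?M = "max (max N1 N2) n"
    have "u = (\<Sum>i<?M. (u \<bullet> e i) *\<^sub>R e i)" by (rule n1[rule_format]) simp
    moreover have "w = (\<Sum>i<?M. (w \<bullet> e i) *\<^sub>R e i)" by (rule n2[rule_format]) simp
    ultimately show ?thesis by (intro exI[of _ ?M]) simp
  qed
  have lowrep: "proj_low e n u = (\<Sum>i\<in>{..<n}. (u \<bullet> e i) *\<^sub>R e i)" for u
    by (simp add: proj_low_def)
  have highrep: "proj_high e n u = (\<Sum>i\<in>{n..<M}. c i *\<^sub>R e i)"
    if "M \<ge> n" "u = (\<Sum>i<M. c i *\<^sub>R e i)" "\<And>i. c i = u \<bullet> e i" for u M c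
  proof -
    have "proj_high e n u = u - (\<Sum>i<n. c i *\<^sub>R e i)"
      by (simp add: proj_high_def proj_low_def that(3))
    also have "\<dots> = (\<Sum>i<M. c i *\<^sub>R e i) - (\<Sum>i<n. c i *\<^sub>R e i)"
      using that(2) by simp
    also have "\<dots> = (\<Sum>i\<in>{..<M} - {..<n}. c i *\<^sub>R e i)"
      using that(1) by (subst sum_diff) auto
    also have "{..<M} - {..<n} = {n..<M}" by auto
    finally show ?thesis .
  qed
  have GE: "\<And>A c. G (\<Sum>i\<in>A. c i *\<^sub>R e i) = (\<Sum>i\<in>A. (lam i * c i) *\<^sub>R e i)"
    by (rule G_E[OF G_bounded_linear G_eigen])
  have span_facts:
    "0 \<le> proj_low e n u \<bullet> G u \<and> 0 \<le> proj_high e n u \<bullet> G u \<and>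
     0 \<le> 1 * norm (proj_low e n u) * norm w + proj_low e n u \<bullet> G w \<and>
     0 \<le> lam n * norm (proj_high e n u) * norm w + proj_high e n u \<bullet> G w"
    if uw: "u \<in> span (range e)" "w \<in> span (range e)" for u w
  proof -
    obtain M where M: "M \<ge> n" "u = (\<Sum>i<M. (u \<bullet> e i) *\<^sub>R e i)" "w = (\<Sum>i<M. (w \<bullet> e i) *\<^sub>R e i)"
      using rep2[OF uw] by blast
    define cu where "cu i = u \<bullet> e i" for i
    define cw where "cw i = w \<bullet> e i" for i
    have u: "u = (\<Sum>i\<in>{..<M}. cu i *\<^sub>R e i)" using M(2) unfolding cu_def by simp
    have w: "w = (\<Sum>i\<in>{..<M}. cw i *\<^sub>R e i)" using M(3) unfolding cw_def by simp
    have pl: "proj_low e n u = (\<Sum>i\<in>{..<n}. cu i *\<^sub>R e i)" by (simp add: lowrep cu_def)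
    have ph: "proj_high e n u = (\<Sum>i\<in>{n..<M}. cu i *\<^sub>R e i)"
      by (rule highrep[OF M(1)]) (use u in \<open>simp_all add: cu_def\<close>)
    have s1: "{..<n} \<subseteq> {..<M}" "{n..<M} \<subseteq> {..<M}" using M(1) by auto
    have Gu: "G u = (\<Sum>i\<in>{..<M}. (lam i * cu i) *\<^sub>R e i)" by (subst u) (rule GE)
    have Gw: "G w = (\<Sum>i\<in>{..<M}. (lam i * cw i) *\<^sub>R e i)" by (subst w) (rule GE)
    have nw: "norm w = norm (\<Sum>i\<in>{..<M}. cw i *\<^sub>R e i)" using w by simp
    show ?thesis
      unfolding pl ph Gu Gw nw
    proof (intro conjI)
      show "0 \<le> (\<Sum>i\<in>{..<n}. cu i *\<^sub>R e i) \<bullet> (\<Sum>i\<in>{..<M}. (lam i * cu i) *\<^sub>R e i)"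
        by (rule fin_pos[OF orth' _ s1(1) lam_nn]) simp
      show "0 \<le> (\<Sum>i\<in>{n..<M}. cu i *\<^sub>R e i) \<bullet> (\<Sum>i\<in>{..<M}. (lam i * cu i) *\<^sub>R e i)"
        by (rule fin_pos[OF orth' _ s1(2) lam_nn]) simp
      show "0 \<le> 1 * norm (\<Sum>i\<in>{..<n}. cu i *\<^sub>R e i) * norm (\<Sum>i\<in>{..<M}. cw i *\<^sub>R e i) +
          (\<Sum>i\<in>{..<n}. cu i *\<^sub>R e i) \<bullet> (\<Sum>i\<in>{..<M}. (lam i * cw i) *\<^sub>R e i)"
        by (rule fin_CS[OF orth' _ s1(1)]) (auto simp: lam_nn lam_le1)
      show "0 \<le> lam n * norm (\<Sum>i\<in>{n..<M}. cu i *\<^sub>R e i) * norm (\<Sum>i\<in>{..<M}. cw i *\<^sub>R e i) +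
          (\<Sum>i\<in>{n..<M}. cu i *\<^sub>R e i) \<bullet> (\<Sum>i\<in>{..<M}. (lam i * cw i) *\<^sub>R e i)"
        by (rule fin_CS[OF orth' _ s1(2)]) (auto simp: lam_nn lam_len)
    qed
  qed
  have cont_pl: "continuous_on UNIV (proj_low e n)"
    unfolding proj_low_def by (intro continuous_intros)
  have cont_ph: "continuous_on UNIV (proj_high e n)"
    unfolding proj_high_def proj_low_def by (intro continuous_intros)
  have QL: "0 \<le> proj_low e n u \<bullet> G u" for u
    by (rule dense_ge[OF complete_basis, of "\<lambda>u. proj_low e n u \<bullet> G u"])
      (auto intro!: continuous_intros cont_pl G_cont dest: span_facts[OF _ span_zero])
  have QH: "0 \<le> proj_high e n u \<bullet> G u" for u
    by (rule dense_ge[OF complete_basis, of "\<lambda>u. proj_high e n u \<bullet> G u"])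
      (auto intro!: continuous_intros cont_ph G_cont dest: span_facts[OF _ span_zero])
  have PL1: "0 \<le> 1 * norm (proj_low e n u) * norm w + proj_low e n u \<bullet> G w"
    if "u \<in> span (range e)" for u w
    by (rule dense_ge[OF complete_basis, of "\<lambda>w. 1 * norm (proj_low e n u) * norm w + proj_low e n u \<bullet> G w"])
      (auto intro!: continuous_intros G_cont dest: span_facts[OF that])
  have PL: "0 \<le> 1 * norm (proj_low e n u) * norm w + proj_low e n u \<bullet> G w" for u w
    by (rule dense_ge[OF complete_basis, of "\<lambda>u. 1 * norm (proj_low e n u) * norm w + proj_low e n u \<bullet> G w"])
      (auto intro!: continuous_intros G_cont cont_pl dest: PL1[of _ w])
  have PH1: "0 \<le> lam n * norm (proj_high e n u) * norm w + proj_high e n u \<bullet> G w"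
    if "u \<in> span (range e)" for u w
    by (rule dense_ge[OF complete_basis, of "\<lambda>w. lam n * norm (proj_high e n u) * norm w + proj_high e n u \<bullet> G w"])
      (auto intro!: continuous_intros G_cont dest: span_facts[OF that])
  have PH: "0 \<le> lam n * norm (proj_high e n u) * norm w + proj_high e n u \<bullet> G w" for u w
    by (rule dense_ge[OF complete_basis, of "\<lambda>u. lam n * norm (proj_high e n u) * norm w + proj_high e n u \<bullet> G w"])
      (auto intro!: continuous_intros G_cont cont_ph dest: PH1[of _ w])
  have e0: "norm (e 0) = 1" using orth'[of 0 0] by (simp add: norm_eq_sqrt_inner)
  have gm_bd: "norm (gm x) \<le> L * R0" for x
  proof (cases "norm x \<ge> R0")
    case True then show ?thesis using gm_vanish R0_pos L_ge by simp
  next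
    case False
    define w where "w = (if x = 0 then R0 *\<^sub>R e 0 else (R0 / norm x) *\<^sub>R x)"
    have nw: "norm w = R0" "norm (x - w) \<le> R0"
    proof -
      show "norm w = R0" using R0_pos e0 by (auto simp: w_def)
      show "norm (x - w) \<le> R0"
      proof (cases "x = 0")
        case True then show ?thesis using R0_pos e0 by (simp add: w_def)
      next
        case xn: False
        have "x - w = (1 - R0 / norm x) *\<^sub>R x" using xn by (simp add: w_def algebra_simps)
        then have "norm (x - w) = \<bar>1 - R0 / norm x\<bar> * norm x" by simp
        also have "\<dots> = (R0 / norm x - 1) * norm x" using False xn by (simp add: abs_if field_simps)
        also have "\<dots> = R0 - norm x" using xn by (simp add: field_simps)
        finally show ?thesis by simp
      qed
    qed
    have "gm w = 0" using gm_vanish nw(1) by simp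
    then have "norm (gm x) = norm (gm x - gm w)" by simp
    also have "\<dots> \<le> L * norm (x - w)" by (rule gm_lipschitz)
    also have "\<dots> \<le> L * R0" using nw(2) L_ge by (simp add: mult_left_mono)
    finally show ?thesis .
  qed
  have pl_diff: "proj_low e n x - proj_low e n y = proj_low e n (x - y)" for x y
    by (simp add: proj_low_def inner_diff_left scaleR_diff_left sum_subtractf)
  have ph_diff: "proj_high e n x - proj_high e n y = proj_high e n (x - y)" for x y
    using pl_diff[of x y] by (simp add: proj_high_def algebra_simps)
  show ?thesis unfolding Let_def n_def[symmetric]
  proof (intro allI impI)
    fix x y
    assume H: "8 * L * R0 \<le> alpha_norm (2 * (1 + L)) e n (x - y)"
    define z where "z = x - y"
    define d where "d = gm x - gm y"
    define zl where "zl = proj_low e n z"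
    define zh where "zh = proj_high e n z"
    have bdiff: "- G (a *\<^sub>R x + gm x) - - G (a *\<^sub>R y + gm y) = - (a *\<^sub>R G z) - G d"
    proof -
      have "- G (a *\<^sub>R x + gm x) - - G (a *\<^sub>R y + gm y) = - (G (a *\<^sub>R x + gm x) - G (a *\<^sub>R y + gm y))"
        by simp
      also have "G (a *\<^sub>R x + gm x) - G (a *\<^sub>R y + gm y) = G ((a *\<^sub>R x + gm x) - (a *\<^sub>R y + gm y))"
        by (simp add: linear_diff[OF l])
      also have "(a *\<^sub>R x + gm x) - (a *\<^sub>R y + gm y) = a *\<^sub>R z + d"
        by (simp add: z_def d_def algebra_simps)
      also have "G (a *\<^sub>R z + d) = a *\<^sub>R G z + G d"
        by (simp add: linear_add[OF l] linear_cmul[OF l])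
      finally show ?thesis by simp
    qed
    have nd: "norm d \<le> 2 * L * R0"
      using norm_triangle_ineq4[of "gm x" "gm y"] gm_bd[of x] gm_bd[of y] unfolding d_def by linarith
    have ql: "0 \<le> zl \<bullet> G z" unfolding zl_def by (rule QL)
    have qh: "0 \<le> zh \<bullet> G z" unfolding zh_def by (rule QH)
    have pL: "0 \<le> norm zl * norm d + zl \<bullet> G d" unfolding zl_def using PL[of z d] by simp
    have pH: "0 \<le> lam n * norm zh * norm d + zh \<bullet> G d" unfolding zh_def using PH[of z d] by simp
    have T1: "(if zl \<noteq> 0 then ((1 / norm zl) *\<^sub>R zl) \<bullet> (- (a *\<^sub>R G z) - G d) else 0) \<le> norm d"
    proof (cases "zl = 0")
      case True then show ?thesis by simp
    next
      case False
      then have pos: "norm zl > 0" by simp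
      have "((1 / norm zl) *\<^sub>R zl) \<bullet> (- (a *\<^sub>R G z) - G d) = (- a * (zl \<bullet> G z) - zl \<bullet> G d) / norm zl"
        using pos by (simp add: inner_diff_right inner_minus_right field_simps)
      also have "\<dots> \<le> (norm zl * norm d) / norm zl"
        using mult_nonneg_nonneg[OF a_nonneg ql] pL pos by (intro divide_right_mono) linarith+
      also have "\<dots> = norm d" using pos by simp
      finally show ?thesis using False by simp
    qed
    have T2: "(if zh \<noteq> 0 then 2 * (1 + L) * (((1 / norm zh) *\<^sub>R zh) \<bullet> (- (a *\<^sub>R G z) - G d)) else 0)
              \<le> 2 * (1 + L) * (lam n * norm d)"
    proof (cases "zh = 0")
      case True then show ?thesis using L_ge lam_nn[of n] by simp
    next
      case False
      then have pos: "norm zh > 0" by simp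
      have "((1 / norm zh) *\<^sub>R zh) \<bullet> (- (a *\<^sub>R G z) - G d) = (- a * (zh \<bullet> G z) - zh \<bullet> G d) / norm zh"
        using pos by (simp add: inner_diff_right inner_minus_right field_simps)
      also have "\<dots> \<le> (lam n * norm zh * norm d) / norm zh"
        using mult_nonneg_nonneg[OF a_nonneg qh] pH pos by (intro divide_right_mono) linarith+
      also have "\<dots> = lam n * norm d" using pos by simp
      finally have f: "((1 / norm zh) *\<^sub>R zh) \<bullet> (- (a *\<^sub>R G z) - G d) \<le> lam n * norm d" .
      have "2 * (1 + L) * (((1 / norm zh) *\<^sub>R zh) \<bullet> (- (a *\<^sub>R G z) - G d)) \<le> 2 * (1 + L) * (lam n * norm d)"
        using f L_ge by (intro mult_left_mono) auto
      then show ?thesis using False by (simp only: if_P[OF False] not_False_eq_True if_True)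
    qed
    have lamL: "2 * (1 + L) * lam n \<le> 2"
    proof -
      have "2 * (1 + L) * lam n \<le> 2 * (1 + L) * (1 / (2 * L))"
        using lamn L_ge by (intro mult_left_mono) auto
      also have "\<dots> = (1 + L) / L" using L_ge by (simp add: field_simps)
      also have "\<dots> \<le> 2" using L_ge by (simp add: field_simps)
      finally show ?thesis .
    qed
    have "norm d + 2 * (1 + L) * (lam n * norm d) \<le> 3 * norm d"
      using lamL mult_right_mono[OF lamL norm_ge_zero[of d]] by (simp add: algebra_simps)
    also have "\<dots> \<le> 6 * L * R0" using nd by simp
    also have "\<dots> \<le> 3 / 4 * alpha_norm (2 * (1 + L)) e n (x - y)" using H by simp
    finally have fin: "norm d + 2 * (1 + L) * (lam n * norm d) \<le> 3 / 4 * alpha_norm (2 * (1 + L)) e n (x - y)" .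
    have xl: "proj_low e n x - proj_low e n y = zl" unfolding zl_def z_def by (rule pl_diff)
    have xh: "proj_high e n x - proj_high e n y = zh" unfolding zh_def z_def by (rule ph_diff)
    have xl': "(proj_low e n x \<noteq> proj_low e n y) = (zl \<noteq> 0)" using xl by auto
    have xh': "(proj_high e n x \<noteq> proj_high e n y) = (zh \<noteq> 0)" using xh by auto
    show "(if proj_low e n x \<noteq> proj_low e n y
           then ((1 / norm (proj_low e n x - proj_low e n y)) *\<^sub>R (proj_low e n x - proj_low e n y)) \<bullet>
                (- G (a *\<^sub>R x + gm x) - - G (a *\<^sub>R y + gm y)) else 0) +
          (if proj_high e n x \<noteq> proj_high e n y
           then 2 * (1 + L) * (((1 / norm (proj_high e n x - proj_high e n y)) *\<^sub>R (proj_high e n x - proj_high e n y)) \<bullet>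
                (- G (a *\<^sub>R x + gm x) - - G (a *\<^sub>R y + gm y))) else 0)
          \<le> 3 / 4 * alpha_norm (2 * (1 + L)) e n (x - y)"
      unfolding xl xh xl' xh' bdiff using T1 T2 fin by linarith
  qed
qed

end
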